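(* Let $X$ be a Banach space, $B$ an admissible Banach sequence space over $\mathbb{Z}$, and $(A_n)_{n\in\mathbb{Z}}$ a sequence of invertible bounded linear operators on $X$ with $\sup_n\lVert A_n\rVert<\infty$ admitting an exponential dichotomy. Then the linear system $x_{n+1}=A_nx_n$, $n\in\mathbb{Z}$, has the $B$-Lipschitz shadowing property: there is $L>0$ such that for every $\varepsilon>0$ and every sequence $(y_n)_{n\in\mathbb{Z}}\subset X$ with $(y_{n+1}-A_ny_n)_{n\in\mathbb{Z}}\in X_B$ and $\lVert(y_{n+1}-A_ny_n)_{n\in\mathbb{Z}}\rVert_B\le L\varepsilon$, there exists $(x_n)_{n\in\mathbb{Z}}$ with $x_{n+1}=A_nx_n$ for all $n$, $(x_n-y_n)_{n\in\mathbb{Z}}\in X_B$ and $\lVert(x_n-y_n)_{n\in\mathbb{Z}}\rVert_B\le\varepsilon$. Furthermore, for each $\varepsilon>0$, the sequence $(x_n)_{n\in\mathbb{Z}}$ satisfying $x_{n+1}=A_nx_n$ for all $n$ and $\lVert(x_n-y_n)_{n\in\mathbb{Z}}\rVert_B\le\varepsilon$ is unique.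
   Context: A normed sequence space over $\mathbb{Z}$ is a linear subspace $B$ of the space of real sequences $\mathbf s=(s_n)_{n\in\mathbb{Z}}$ with a norm $\lVert\cdot\rVert_B$ such that if $\mathbf s'\in B$ and $|s_n|\le|s'_n|$ for all $n$ then $\mathbf s\in B$ and $\lVert\mathbf s\rVert_B\le\lVert\mathbf s'\rVert_B$; a Banach sequence space if complete. Admissible: each $\chi_{\{n\}}\in B$ with $\lVert\chi_{\{n\}}\rVert_B>0$, and $B$ is invariant under shifts $(s_n)\mapsto(s_{n+m})$ with equal norms; assume $\lVert\chi_{\{0\}}\rVert_B=1$. $X_B$ is the set of sequences $(x_n)\subset X$ with $(\lVert x_n\rVert)\in B$, normed by $\lVert\mathbf x\rVert_B=\lVert(\lVert x_n\rVert)_n\rVert_B$. Exponential dichotomy: with $\mathcal A(m,n)=A_{m-1}\cdots A_n$ ($m>n$), $\mathrm{Id}$ ($m=n$), $A_m^{-1}\cdots A_{n-1}^{-1}$ ($m<n$), there exist projections $P_m$ with $P_{m+1}A_m=A_mP_m$ and $C,\lambda>0$ with $\lVert\mathcal A(m,n)P_n\rVert\le Ce^{-\lambda(m-n)}$ ($m\ge n$) and $\lVert\mathcal A(m,n)(\mathrm{Id}-P_n)\rVert\le Ce^{-\lambda(n-m)}$ ($m\le n$). *)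

theory Defs
  imports "HOL-Analysis.Analysis"
begin

definition banach_seq_space :: "(int \<Rightarrow> real) set \<Rightarrow> ((int \<Rightarrow> real) \<Rightarrow> real) \<Rightarrow> bool" where
  "banach_seq_space B N \<longleftrightarrow>
     ((\<lambda>n. 0) \<in> B) \<and>
     (\<forall>s\<in>B. \<forall>t\<in>B. (\<lambda>n. s n + t n) \<in> B) \<and>
     (\<forall>s\<in>B. \<forall>c::real. (\<lambda>n. c * s n) \<in> B) \<and>
     (\<forall>s\<in>B. N s \<ge> 0) \<and>
     (\<forall>s\<in>B. N s = 0 \<longleftrightarrow> (\<forall>n. s n = 0)) \<and>
     (\<forall>s\<in>B. \<forall>c::real. N (\<lambda>n. c * s n) = \<bar>c\<bar> * N s) \<and>
     (\<forall>s\<in>B. \<forall>t\<in>B. N (\<lambda>n. s n + t n) \<le> N s + N t) \<and>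
     (\<forall>s s'. s' \<in> B \<and> (\<forall>n. \<bar>s n\<bar> \<le> \<bar>s' n\<bar>) \<longrightarrow> s \<in> B \<and> N s \<le> N s') \<and>
     (\<forall>f :: nat \<Rightarrow> int \<Rightarrow> real.
        (\<forall>k. f k \<in> B) \<and> (\<forall>e>0. \<exists>M. \<forall>m\<ge>M. \<forall>k\<ge>M. N (\<lambda>n. f m n - f k n) < e)
        \<longrightarrow> (\<exists>s\<in>B. (\<lambda>k. N (\<lambda>n. f k n - s n)) \<longlonglongrightarrow> 0))"

definition admissible :: "(int \<Rightarrow> real) set \<Rightarrow> ((int \<Rightarrow> real) \<Rightarrow> real) \<Rightarrow> bool" where
  "admissible B N \<longleftrightarrow>
     (\<forall>n. indicator {n} \<in> B \<and> N (indicator {n}) > 0) \<and>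
     (\<forall>s\<in>B. \<forall>m::int. (\<lambda>n. s (n + m)) \<in> B \<and> N (\<lambda>n. s (n + m)) = N s) \<and>
     N (indicator {0}) = 1"

definition in_XB :: "(int \<Rightarrow> real) set \<Rightarrow> (int \<Rightarrow> 'a::real_normed_vector) \<Rightarrow> bool" where
  "in_XB B x \<longleftrightarrow> (\<lambda>n. norm (x n)) \<in> B"

definition norm_XB :: "((int \<Rightarrow> real) \<Rightarrow> real) \<Rightarrow> (int \<Rightarrow> 'a::real_normed_vector) \<Rightarrow> real" where
  "norm_XB N x = N (\<lambda>n. norm (x n))"

definition invertible_op :: "('a::real_normed_vector \<Rightarrow>\<^sub>L 'a) \<Rightarrow> bool" where
  "invertible_op T \<longleftrightarrow> (\<exists>S. S o\<^sub>L T = id_blinfun \<and> T o\<^sub>L S = id_blinfun)"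

definition inv_op :: "('a::real_normed_vector \<Rightarrow>\<^sub>L 'a) \<Rightarrow> ('a \<Rightarrow>\<^sub>L 'a)" where
  "inv_op T = (SOME S. S o\<^sub>L T = id_blinfun \<and> T o\<^sub>L S = id_blinfun)"

text \<open>fwd A n k = A(n+k-1) ... A(n) ;  bwd A n k = A(n-k)^-1 ... A(n-1)^-1.\<close>

fun fwd :: "(int \<Rightarrow> ('a::real_normed_vector \<Rightarrow>\<^sub>L 'a)) \<Rightarrow> int \<Rightarrow> nat \<Rightarrow> ('a \<Rightarrow>\<^sub>L 'a)" where
  "fwd A n 0 = id_blinfun"
| "fwd A n (Suc k) = A (n + int k) o\<^sub>L fwd A n k"

fun bwd :: "(int \<Rightarrow> ('a::real_normed_vector \<Rightarrow>\<^sub>L 'a)) \<Rightarrow> int \<Rightarrow> nat \<Rightarrow> ('a \<Rightarrow>\<^sub>L 'a)" where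
  "bwd A n 0 = id_blinfun"
| "bwd A n (Suc k) = inv_op (A (n - int k - 1)) o\<^sub>L bwd A n k"

definition cocycle :: "(int \<Rightarrow> ('a::real_normed_vector \<Rightarrow>\<^sub>L 'a)) \<Rightarrow> int \<Rightarrow> int \<Rightarrow> ('a \<Rightarrow>\<^sub>L 'a)" where
  "cocycle A m n = (if n \<le> m then fwd A n (nat (m - n)) else bwd A n (nat (n - m)))"

definition exp_dichotomy :: "(int \<Rightarrow> ('a::real_normed_vector \<Rightarrow>\<^sub>L 'a)) \<Rightarrow> bool" where
  "exp_dichotomy A \<longleftrightarrow>
     (\<exists>P :: int \<Rightarrow> ('a \<Rightarrow>\<^sub>L 'a). \<exists>C lam::real. C > 0 \<and> lam > 0 \<and>
        (\<forall>m. P m o\<^sub>L P m = P m) \<and>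
        (\<forall>m. P (m + 1) o\<^sub>L A m = A m o\<^sub>L P m) \<and>
        (\<forall>m n. m \<ge> n \<longrightarrow> norm (cocycle A m n o\<^sub>L P n) \<le> C * exp (- lam * real_of_int (m - n))) \<and>
        (\<forall>m n. m \<le> n \<longrightarrow> norm (cocycle A m n o\<^sub>L (id_blinfun - P n)) \<le> C * exp (- lam * real_of_int (n - m))))"

end

theory Submission
  imports Defs
begin


context
  fixes B :: "(int \<Rightarrow> real) set" and N :: "(int \<Rightarrow> real) \<Rightarrow> real"
  assumes bss: "banach_seq_space B N" and adm: "admissible B N"
begin

lemma B_zero: "(\<lambda>n. 0) \<in> B" using bss unfolding banach_seq_space_def by blast
lemma B_add: "s \<in> B \<Longrightarrow> t \<in> B \<Longrightarrow> (\<lambda>n. s n + t n) \<in> B" using bss unfolding banach_seq_space_def by blast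
lemma B_scale: "s \<in> B \<Longrightarrow> (\<lambda>n. c * s n) \<in> B" using bss unfolding banach_seq_space_def by blast
lemma N_scale: "s \<in> B \<Longrightarrow> N (\<lambda>n. c * s n) = \<bar>c\<bar> * N s" using bss unfolding banach_seq_space_def by blast
lemma N_tri: "s \<in> B \<Longrightarrow> t \<in> B \<Longrightarrow> N (\<lambda>n. s n + t n) \<le> N s + N t" using bss unfolding banach_seq_space_def by blast
lemma N_nonneg: "s \<in> B \<Longrightarrow> N s \<ge> 0" using bss unfolding banach_seq_space_def by blast
lemma B_latt: "s' \<in> B \<Longrightarrow> (\<And>n. \<bar>s n\<bar> \<le> \<bar>s' n\<bar>) \<Longrightarrow> s \<in> B \<and> N s \<le> N s'"
  using bss unfolding banach_seq_space_def by blast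
lemma B_complete: "(\<And>k. f k \<in> B) \<Longrightarrow> (\<And>e. e>0 \<Longrightarrow> \<exists>M. \<forall>m\<ge>M. \<forall>k\<ge>M. N (\<lambda>n. f m n - f k n) < e)
        \<Longrightarrow> (\<exists>s\<in>B. (\<lambda>k. N (\<lambda>n. f k n - s n)) \<longlonglongrightarrow> 0)"
  using bss unfolding banach_seq_space_def by blast
lemma B_shift: "s \<in> B \<Longrightarrow> (\<lambda>n. s (n + m)) \<in> B \<and> N (\<lambda>n. s (n + m)) = N s"
  using adm unfolding admissible_def by blast

lemma B_diff: "s \<in> B \<Longrightarrow> t \<in> B \<Longrightarrow> (\<lambda>n. s n - t n) \<in> B"
proof -
  assume "s \<in> B" "t \<in> B"
  then have "(\<lambda>n. s n + (-1) * t n) \<in> B" using B_add B_scale by blast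
  then show ?thesis by simp
qed

lemma N_ind: "N (indicator {k}) = 1"
proof -
  have "indicator {0} \<in> B" "N (indicator {0}) = 1" using adm unfolding admissible_def by auto
  from B_shift[OF this(1), of "-k"] this(2)
  have "N (\<lambda>n. indicator {0} (n + - k)) = 1" by simp
  moreover have "(\<lambda>n. indicator {0} (n + - k) :: real) = indicator {k}"
    by (auto simp: indicator_def)
  ultimately show ?thesis by simp
qed

lemma pt_le_N: "s \<in> B \<Longrightarrow> \<bar>s k\<bar> \<le> N s"
proof -
  assume s: "s \<in> B"
  have i: "indicator {k} \<in> B" using adm unfolding admissible_def by blast
  have "N (\<lambda>n. \<bar>s k\<bar> * indicator {k} n) \<le> N s"
    by (rule B_latt[OF s, THEN conjunct2]) (auto simp: indicator_def)
  with N_scale[OF i, of "\<bar>s k\<bar>"] N_ind show ?thesis by simp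
qed

lemma N_minus_sym: "s \<in> B \<Longrightarrow> t \<in> B \<Longrightarrow> N (\<lambda>n. s n - t n) = N (\<lambda>n. t n - s n)"
proof -
  assume "s \<in> B" "t \<in> B"
  then have d: "(\<lambda>n. t n - s n) \<in> B" by (rule B_diff[rotated])
  have "N (\<lambda>n. (-1) * (t n - s n)) = N (\<lambda>n. t n - s n)" using N_scale[OF d, of "-1"] by simp
  then show ?thesis by simp
qed

lemma finsum_B:
  assumes s: "s \<in> B" and fin: "finite J"
  shows "(\<lambda>n. \<Sum>j\<in>J. c j * s (n + d j)) \<in> B \<and> N (\<lambda>n. \<Sum>j\<in>J. c j * s (n + d j)) \<le> (\<Sum>j\<in>J. \<bar>c j\<bar>) * N s"
  using fin
proof (induction J rule: finite_induct)
  case empty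
  then show ?case using B_zero N_scale[OF B_zero, of 0] by simp
next
  case (insert x F)
  have sh: "(\<lambda>n. s (n + d x)) \<in> B" "N (\<lambda>n. s (n + d x)) = N s" using B_shift[OF s] by auto
  have t1: "(\<lambda>n. c x * s (n + d x)) \<in> B" using B_scale[OF sh(1)] .
  have n1: "N (\<lambda>n. c x * s (n + d x)) = \<bar>c x\<bar> * N s" using N_scale[OF sh(1)] sh(2) by simp
  have eq: "(\<lambda>n. \<Sum>j\<in>insert x F. c j * s (n + d j)) = (\<lambda>n. c x * s (n + d x) + (\<Sum>j\<in>F. c j * s (n + d j)))"
    using insert by simp
  show ?case unfolding eq
    using B_add[OF t1 insert.IH[THEN conjunct1]] N_tri[OF t1 insert.IH[THEN conjunct1]] n1 insert
    by (simp add: distrib_right)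
qed

lemma conv_B:
  assumes s: "s \<in> B" and snn: "\<And>n. s n \<ge> 0" and cnn: "\<And>j. c j \<ge> 0" and sc: "summable c"
  shows "(\<lambda>n. \<Sum>j. c j * s (n + d j)) \<in> B \<and> N (\<lambda>n. \<Sum>j. c j * s (n + d j)) \<le> (\<Sum>j. c j) * N s"
proof -
  define f where "f k = (\<lambda>n. \<Sum>j<k. c j * s (n + d j))" for k
  define h where "h = (\<lambda>n. \<Sum>j. c j * s (n + d j))"
  have Ns: "N s \<ge> 0" using N_nonneg[OF s] .
  have fB: "f k \<in> B \<and> N (f k) \<le> (\<Sum>j<k. c j) * N s" for k
    using finsum_B[OF s, of "{..<k}" c d] cnn unfolding f_def by simp
  have summ: "summable (\<lambda>j. c j * s (n + d j))" for n
  proof (rule summable_comparison_test[of _ "\<lambda>j. c j * N s"])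
    show "\<exists>M. \<forall>j\<ge>M. norm (c j * s (n + d j)) \<le> c j * N s"
      using pt_le_N[OF s] cnn snn by (auto intro!: mult_left_mono simp: abs_mult)
    show "summable (\<lambda>j. c j * N s)" using sc by (rule summable_mult2)
  qed
  have gap: "\<bar>f m n - f k n\<bar> \<le> (\<Sum>j\<in>{k..<m}. c j * s (n + d j))" if "k \<le> m" for k m n
  proof -
    have "f m n - f k n = (\<Sum>j\<in>{k..<m}. c j * s (n + d j))"
      unfolding f_def using sum_diff_nat_ivl[of 0 k m] that by (simp add: atLeast0LessThan)
    moreover have "(\<Sum>j\<in>{k..<m}. c j * s (n + d j)) \<ge> 0" using cnn snn by (simp add: sum_nonneg)
    ultimately show ?thesis by simp
  qed
  have gapN: "N (\<lambda>n. f m n - f k n) \<le> (\<Sum>j\<in>{k..<m}. c j) * N s" if "k \<le> m" for k m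
  proof -
    have "N (\<lambda>n. f m n - f k n) \<le> N (\<lambda>n. \<Sum>j\<in>{k..<m}. c j * s (n + d j))"
      using B_latt[OF finsum_B[OF s, of "{k..<m}" c d, THEN conjunct1]] gap[OF that] cnn snn
      by (simp add: sum_nonneg)
    also have "\<dots> \<le> (\<Sum>j\<in>{k..<m}. c j) * N s" using finsum_B[OF s, of "{k..<m}" c d] cnn by simp
    finally show ?thesis .
  qed
  have cauchy: "\<exists>M. \<forall>m\<ge>M. \<forall>k\<ge>M. N (\<lambda>n. f m n - f k n) < e" if e: "e > 0" for e
  proof -
    obtain M where M: "\<forall>m\<ge>M. \<forall>n. norm (sum c {m..<n}) < e / (N s + 1)"
      using sc[unfolded summable_Cauchy] e Ns by (metis add_nonneg_pos divide_pos_pos zero_less_one)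
    have key: "N (\<lambda>n. f m n - f k n) < e" if "k \<ge> M" "m \<ge> k" for m k
    proof -
      have "norm (sum c {k..<m}) < e / (N s + 1)" using M that by blast
      then have "sum c {k..<m} < e / (N s + 1)" by simp
      then have "sum c {k..<m} * N s \<le> e / (N s + 1) * N s" using Ns by (intro mult_right_mono) auto
      also have "\<dots> < e" using e Ns by (simp add: field_simps)
      finally show ?thesis using gapN[OF that(2)] by linarith
    qed
    show ?thesis
    proof (intro exI allI impI)
      fix m k assume "m \<ge> M" "k \<ge> M"
      show "N (\<lambda>n. f m n - f k n) < e"
      proof (cases "k \<le> m")
        case True then show ?thesis using key \<open>k \<ge> M\<close> by blast
      next
        case False
        then have "N (\<lambda>n. f k n - f m n) < e" using key \<open>m \<ge> M\<close> by simp
        then show ?thesis using N_minus_sym fB by metis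
      qed
    qed
  qed
  obtain h' where h': "h' \<in> B" "(\<lambda>k. N (\<lambda>n. f k n - h' n)) \<longlonglongrightarrow> 0"
    using B_complete[of f] fB cauchy by blast
  have "h' = h"
  proof
    fix n
    have "(\<lambda>k. f k n) \<longlonglongrightarrow> h' n"
    proof (rule tendsto_sandwich[of "\<lambda>k. h' n - N (\<lambda>n. f k n - h' n)" _ _ "\<lambda>k. h' n + N (\<lambda>n. f k n - h' n)"])
      have b: "\<bar>f k n - h' n\<bar> \<le> N (\<lambda>n. f k n - h' n)" for k
        using pt_le_N[OF B_diff[OF fB[THEN conjunct1] h'(1)]] by simp
      show "\<forall>\<^sub>F k in sequentially. h' n - N (\<lambda>n. f k n - h' n) \<le> f k n"
        using b by (intro always_eventually allI) (smt (verit))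
      show "\<forall>\<^sub>F k in sequentially. f k n \<le> h' n + N (\<lambda>n. f k n - h' n)"
        using b by (intro always_eventually allI) (smt (verit))
      show "(\<lambda>k. h' n - N (\<lambda>n. f k n - h' n)) \<longlonglongrightarrow> h' n"
        using tendsto_diff[OF tendsto_const h'(2)] by simp
      show "(\<lambda>k. h' n + N (\<lambda>n. f k n - h' n)) \<longlonglongrightarrow> h' n"
        using tendsto_add[OF tendsto_const h'(2)] by simp
    qed
    moreover have "(\<lambda>k. f k n) \<longlonglongrightarrow> h n"
      unfolding f_def h_def using summable_LIMSEQ[OF summ] by simp
    ultimately show "h' n = h n" using LIMSEQ_unique by blast
  qed
  with h' have hB: "h \<in> B" and hl: "(\<lambda>k. N (\<lambda>n. f k n - h n)) \<longlonglongrightarrow> 0" by auto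
  have "N h \<le> (\<Sum>j. c j) * N s"
  proof (rule field_le_epsilon)
    fix e :: real assume e: "e > 0"
    obtain k where k: "N (\<lambda>n. f k n - h n) < e"
      using hl e by (metis (no_types, lifting) LIMSEQ_D diff_zero le_refl norm_conv_dist real_norm_def dist_real_def abs_less_iff)
    have "h = (\<lambda>n. f k n + (h n - f k n))" by simp
    then have "N h \<le> N (f k) + N (\<lambda>n. h n - f k n)"
      using N_tri[OF fB[THEN conjunct1] B_diff[OF hB fB[THEN conjunct1]]] by metis
    moreover have "N (\<lambda>n. h n - f k n) = N (\<lambda>n. f k n - h n)" using N_minus_sym hB fB by metis
    moreover have "N (f k) \<le> (\<Sum>j<k. c j) * N s" using fB by blast
    moreover have "(\<Sum>j<k. c j) \<le> (\<Sum>j. c j)" using sum_le_suminf[OF sc, of "{..<k}"] cnn by auto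
    moreover have "(\<Sum>j<k. c j) * N s \<le> (\<Sum>j. c j) * N s"
      using calculation(4) Ns by (rule mult_right_mono)
    ultimately show "N h \<le> (\<Sum>j. c j) * N s + e" using k by linarith
  qed
  with hB show ?thesis unfolding h_def by blast
qed

end


lemma inv_op_props:
  assumes "invertible_op T"
  shows "inv_op T o\<^sub>L T = id_blinfun" "T o\<^sub>L inv_op T = id_blinfun"
proof -
  have "\<exists>S. S o\<^sub>L T = id_blinfun \<and> T o\<^sub>L S = id_blinfun" using assms unfolding invertible_op_def .
  from someI_ex[OF this] show "inv_op T o\<^sub>L T = id_blinfun" "T o\<^sub>L inv_op T = id_blinfun"
    unfolding inv_op_def by auto
qed

lemma blinfun_compose_assoc: "(a o\<^sub>L b) o\<^sub>L c = a o\<^sub>L (b o\<^sub>L c)"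
  by (rule blinfun_eqI) simp
lemma blinfun_compose_id[simp]: "a o\<^sub>L id_blinfun = a" "id_blinfun o\<^sub>L a = a"
  by (rule blinfun_eqI, simp)+

lemma cocycle_same: "cocycle A m m = id_blinfun"
  by (simp add: cocycle_def)

lemma cocycle_fwd_step: "n \<le> m \<Longrightarrow> cocycle A (m+1) n = A m o\<^sub>L cocycle A m n"
proof -
  assume "n \<le> m"
  then have "nat (m + 1 - n) = Suc (nat (m - n))" "n + int (nat (m - n)) = m" by auto
  then show ?thesis using \<open>n \<le> m\<close> by (simp add: cocycle_def)
qed

lemma cocycle_bwd_step: "m < n \<Longrightarrow> cocycle A m n = inv_op (A m) o\<^sub>L cocycle A (m+1) n"
proof -
  assume mn: "m < n"
  then have e: "nat (n - m) = Suc (nat (n - (m+1)))" "n - int (nat (n - (m+1))) - 1 = m" by auto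
  have "cocycle A (m+1) n = bwd A n (nat (n - (m+1)))"
    using mn by (cases "n = m + 1") (auto simp: cocycle_def)
  then show ?thesis using mn e by (auto simp: cocycle_def)
qed

context
  fixes A :: "int \<Rightarrow> ('a::real_normed_vector \<Rightarrow>\<^sub>L 'a)"
  assumes inv: "\<forall>n. invertible_op (A n)"
begin

lemma U1: "cocycle A (m+1) n = A m o\<^sub>L cocycle A m n"
proof (cases "n \<le> m")
  case True then show ?thesis by (rule cocycle_fwd_step)
next
  case False
  then have "cocycle A m n = inv_op (A m) o\<^sub>L cocycle A (m+1) n" by (intro cocycle_bwd_step) auto
  then show ?thesis using inv_op_props[of "A m"] inv
    by (simp add: blinfun_compose_assoc[symmetric])
qed

lemma U2: "cocycle A m n = inv_op (A m) o\<^sub>L cocycle A (m+1) n"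
  using inv_op_props[of "A m"] inv U1[of m n] by (simp add: blinfun_compose_assoc[symmetric])

lemma sol_inv: "x (m + 1) = A m (x m) \<Longrightarrow> x m = inv_op (A m) (x (m+1))"
proof -
  assume "x (m + 1) = A m (x m)"
  then have "inv_op (A m) (x (m+1)) = (inv_op (A m) o\<^sub>L A m) (x m)" by simp
  then show ?thesis using inv_op_props[of "A m"] inv by simp
qed

lemma cocycle_sol:
  assumes sol: "\<forall>n. x (n + 1) = A n (x n)"
  shows "cocycle A m n (x n) = x m"
proof (induction m rule: int_induct[where k = n])
  case base then show ?case by (simp add: cocycle_same)
next
  case (step1 i) then show ?case using sol U1[of i n] by simp
next
  case (step2 i) then show ?case using sol U2[of "i - 1" n] sol_inv[of x "i - 1"] sol[rule_format, of "i-1"] by simp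
qed

lemma P_comm:
  assumes Pc: "\<forall>m. P (m + 1) o\<^sub>L A m = A m o\<^sub>L P m"
  shows "P m o\<^sub>L cocycle A m n = cocycle A m n o\<^sub>L P n"
proof (induction m rule: int_induct[where k = n])
  case base then show ?case by (simp add: cocycle_same)
next
  case (step1 i)
  have "P (i+1) o\<^sub>L cocycle A (i + 1) n = (P (i+1) o\<^sub>L A i) o\<^sub>L cocycle A i n"
    by (simp add: U1 blinfun_compose_assoc)
  also have "\<dots> = A i o\<^sub>L (P i o\<^sub>L cocycle A i n)" using Pc by (simp add: blinfun_compose_assoc)
  also have "\<dots> = cocycle A (i+1) n o\<^sub>L P n" using step1 by (simp add: U1 blinfun_compose_assoc)
  finally show ?case .
next
  case (step2 i)
  have ia: "P (i - 1) o\<^sub>L inv_op (A (i-1)) = inv_op (A (i-1)) o\<^sub>L P i"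
  proof -
    have pc: "P i o\<^sub>L A (i-1) = A (i-1) o\<^sub>L P (i - 1)" using Pc[rule_format, of "i-1"] by simp
    have "inv_op (A (i-1)) o\<^sub>L P i = inv_op (A (i-1)) o\<^sub>L P i o\<^sub>L (A (i-1) o\<^sub>L inv_op (A (i-1)))"
      using inv_op_props[of "A (i-1)"] inv by simp
    also have "\<dots> = (inv_op (A (i-1)) o\<^sub>L A (i-1)) o\<^sub>L P (i - 1) o\<^sub>L inv_op (A (i-1))"
      using pc by (metis blinfun_compose_assoc)
    also have "\<dots> = P (i - 1) o\<^sub>L inv_op (A (i-1))"
      using inv_op_props[of "A (i-1)"] inv by simp
    finally show ?thesis by simp
  qed
  have "P (i - 1) o\<^sub>L cocycle A (i - 1) n = (P (i - 1) o\<^sub>L inv_op (A (i-1))) o\<^sub>L cocycle A i n"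
    using U2[of "i-1" n] by (simp add: blinfun_compose_assoc)
  also have "\<dots> = inv_op (A (i-1)) o\<^sub>L (P i o\<^sub>L cocycle A i n)" using ia by (simp add: blinfun_compose_assoc)
  also have "\<dots> = cocycle A (i - 1) n o\<^sub>L P n" using step2 U2[of "i-1" n] by (simp add: blinfun_compose_assoc)
  finally show ?case .
qed

end


lemma expq: "exp (- (lam * real k)) = exp (- lam) ^ k"
  using exp_of_nat_mult[of k "-lam"] by (simp add: mult.commute)

lemma zero_by_geom:
  fixes v :: "'a::real_normed_vector"
  assumes "\<And>k::nat. norm v \<le> E * q ^ k" "0 \<le> q" "q < 1"
  shows "v = 0"
proof -
  have "(\<lambda>k. E * q ^ k) \<longlonglongrightarrow> 0"
    using LIMSEQ_power_zero[of q] assms by (intro tendsto_mult_right_zero) auto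
  then have "norm v \<le> 0"
    by (rule tendsto_le[OF sequentially_bot _ tendsto_const]) (use assms(1) in auto)
  then show ?thesis by simp
qed

lemma uniqueness:
  fixes A :: "int \<Rightarrow> ('a::banach \<Rightarrow>\<^sub>L 'a)"
  assumes inv: "\<forall>n. invertible_op (A n)"
    and C: "C > 0" and lam: "lam > 0"
    and Pc: "\<forall>m. P (m + 1) o\<^sub>L A m = A m o\<^sub>L P m"
    and st: "\<forall>m n. m \<ge> n \<longrightarrow> norm (cocycle A m n o\<^sub>L P n) \<le> C * exp (- lam * real_of_int (m - n))"
    and un: "\<forall>m n. m \<le> n \<longrightarrow> norm (cocycle A m n o\<^sub>L (id_blinfun - P n)) \<le> C * exp (- lam * real_of_int (n - m))"
    and sol: "\<forall>n. w (n + 1) = A n (w n)"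
    and bd: "\<And>n. norm (w n) \<le> D"
  shows "w n = 0"
proof -
  define q where "q = exp (- lam)"
  have q: "0 \<le> q" "q < 1" using lam by (auto simp: q_def)
  have D: "D \<ge> 0" using bd[of 0] norm_ge_zero[of "w 0"] by linarith
  have pc: "P m (cocycle A m k v) = cocycle A m k (P k v)" for m k v
    using arg_cong[OF P_comm[OF inv Pc, of m k], of "\<lambda>F. blinfun_apply F v"] by simp
  have "P n (w n) = 0"
  proof (rule zero_by_geom[OF _ q])
    fix k :: nat
    have "P n (w n) = P n (cocycle A n (n - int k) (w (n - int k)))"
      using cocycle_sol[OF inv sol] by simp
    also have "\<dots> = (cocycle A n (n - int k) o\<^sub>L P (n - int k)) (w (n - int k))" using pc by simp
    finally have "norm (P n (w n)) \<le> norm (cocycle A n (n - int k) o\<^sub>L P (n - int k)) * norm (w (n - int k))"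
      using norm_blinfun by metis
    also have "\<dots> \<le> (C * q ^ k) * D"
      using st[rule_format, of "n - int k" n] bd[of "n - int k"] C
      by (intro mult_mono) (auto simp: q_def expq)
    finally show "norm (P n (w n)) \<le> (C * D) * q ^ k" by (simp add: algebra_simps)
  qed
  moreover have "(id_blinfun - P n) (w n) = 0"
  proof (rule zero_by_geom[OF _ q])
    fix k :: nat
    have "(id_blinfun - P n) (w n) = (id_blinfun - P n) (cocycle A n (n + int k) (w (n + int k)))"
      using cocycle_sol[OF inv sol] by simp
    also have "\<dots> = (cocycle A n (n + int k) o\<^sub>L (id_blinfun - P (n + int k))) (w (n + int k))"
      using pc by (simp add: blinfun.diff_left blinfun.diff_right)
    finally have "norm ((id_blinfun - P n) (w n)) \<le> norm (cocycle A n (n + int k) o\<^sub>L (id_blinfun - P (n + int k))) * norm (w (n + int k))"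
      using norm_blinfun by metis
    also have "\<dots> \<le> (C * q ^ k) * D"
      using un[rule_format, of n "n + int k"] bd[of "n + int k"] C
      by (intro mult_mono) (auto simp: q_def expq)
    finally show "norm ((id_blinfun - P n) (w n)) \<le> (C * D) * q ^ k" by (simp add: algebra_simps)
  qed
  ultimately show "w n = 0" by (simp add: blinfun.diff_left)
qed



lemma summ_geom_bd:
  fixes f :: "nat \<Rightarrow> 'a::banach"
  assumes "0 \<le> q" "q < 1" "\<And>j. norm (f j) \<le> E * q ^ j * t j" "\<And>j. 0 \<le> t j" "\<And>j. t j \<le> T" "0 \<le> E"
  shows "summable f"
proof (rule summable_comparison_test'[of "\<lambda>j. (E * T) * q ^ j" 0])
  show "norm (f j) \<le> E * T * q ^ j" for j
  proof -
    have "E * q ^ j * t j \<le> E * q ^ j * T" using assms by (intro mult_left_mono) auto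
    then show ?thesis using assms(3)[of j] by (simp add: algebra_simps)
  qed
  show "summable (\<lambda>j. E * T * q ^ j)" using assms by (intro summable_mult summable_geometric) auto
qed

lemma existence:
  fixes A :: "int \<Rightarrow> ('a::banach \<Rightarrow>\<^sub>L 'a)" and g :: "int \<Rightarrow> 'a"
  assumes bss: "banach_seq_space B N" and adm: "admissible B N"
    and inv: "\<forall>n. invertible_op (A n)"
    and C: "C > 0" and lam: "lam > 0"
    and st: "\<forall>m n. m \<ge> n \<longrightarrow> norm (cocycle A m n o\<^sub>L P n) \<le> C * exp (- lam * real_of_int (m - n))"
    and un: "\<forall>m n. m \<le> n \<longrightarrow> norm (cocycle A m n o\<^sub>L (id_blinfun - P n)) \<le> C * exp (- lam * real_of_int (n - m))"
    and gB: "(\<lambda>n. norm (g n)) \<in> B"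
  shows "\<exists>z. (\<forall>n. z (n+1) = A n (z n) + g n) \<and> (\<lambda>n. norm (z n)) \<in> B \<and>
            N (\<lambda>n. norm (z n)) \<le> (2 * C / (1 - exp (- lam))) * N (\<lambda>n. norm (g n))"
proof -
  define q where "q = exp (- lam)"
  have q: "0 \<le> q" "q < 1" "0 < q" using lam by (auto simp: q_def)
  define s where "s n = norm (g n)" for n
  have sB: "s \<in> B" using gB unfolding s_def .
  define Ns where "Ns = N s"
  have sb: "s k \<le> Ns" for k using pt_le_N[OF bss adm sB, of k] unfolding Ns_def by simp
  have s0: "0 \<le> s k" for k unfolding s_def by simp
  define T1 where "T1 n j = (cocycle A n (n - int j) o\<^sub>L P (n - int j)) (g (n - 1 - int j))" for n j
  define T2 where "T2 n j = (cocycle A n (n + 1 + int j) o\<^sub>L (id_blinfun - P (n + 1 + int j))) (g (n + int j))" for n j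
  have b1: "norm (T1 n j) \<le> C * q ^ j * s (n + (- 1 - int j))" for n j
  proof -
    have "norm (T1 n j) \<le> norm (cocycle A n (n - int j) o\<^sub>L P (n - int j)) * s (n - 1 - int j)"
      unfolding T1_def s_def by (rule norm_blinfun)
    also have "\<dots> \<le> C * q ^ j * s (n - 1 - int j)"
      using st[rule_format, of "n - int j" n] s0 by (intro mult_right_mono) (auto simp: q_def expq)
    finally show ?thesis by (simp add: algebra_simps)
  qed
  have b2: "norm (T2 n j) \<le> C * q ^ j * s (n + int j)" for n j
  proof -
    have "norm (T2 n j) \<le> norm (cocycle A n (n + 1 + int j) o\<^sub>L (id_blinfun - P (n + 1 + int j))) * s (n + int j)"
      unfolding T2_def s_def by (rule norm_blinfun)
    also have "\<dots> \<le> C * q ^ (Suc j) * s (n + int j)"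
    proof -
      have "exp (- lam * real_of_int (n + 1 + int j - n)) = q ^ Suc j"
        unfolding q_def expq[of lam "Suc j", symmetric] by (simp add: algebra_simps)
      then show ?thesis using un[rule_format, of n "n + 1 + int j"] s0
        by (intro mult_right_mono) auto
    qed
    also have "\<dots> \<le> C * q ^ j * s (n + int j)"
      using q C s0[of "n + int j"] by (intro mult_right_mono) (auto simp: power_le_imp_le_exp mult_left_le_one_le)
    finally show ?thesis .
  qed
  have sum1: "summable (T1 n)" for n
    by (rule summ_geom_bd[OF q(1,2) b1 s0 sb C[THEN less_imp_le]])
  have sum2: "summable (T2 n)" for n
    by (rule summ_geom_bd[OF q(1,2) b2 s0 sb C[THEN less_imp_le]])
  define z where "z n = suminf (T1 n) - suminf (T2 n)" for n
  have BL: "bounded_linear (blinfun_apply (A n))" for n by (rule blinfun.bounded_linear_right)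
  have rec: "z (n+1) = A n (z n) + g n" for n
  proof -
    have t1s: "T1 (n+1) (Suc j) = A n (T1 n j)" for j
    proof -
      have "n + 1 - int (Suc j) = n - int j" "n + 1 - 1 - int (Suc j) = n - 1 - int j" by auto
      then show ?thesis unfolding T1_def using U1[OF inv, of n "n - int j"] by (simp add: diff_diff_eq)
    qed
    have t10: "T1 (n+1) 0 = P (n+1) (g n)" unfolding T1_def by (simp add: cocycle_same)
    have t2s: "T2 (n+1) j = A n (T2 n (Suc j))" for j
    proof -
      have "n + 1 + 1 + int j = n + 1 + int (Suc j)" "n + 1 + int j = n + int (Suc j)" by auto
      then show ?thesis unfolding T2_def using U1[OF inv, of n "n + 1 + int (Suc j)"] by (simp add: add.assoc)
    qed
    have t20: "A n (T2 n 0) = g n - P (n+1) (g n)"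
    proof -
      have "A n (T2 n 0) = (A n o\<^sub>L cocycle A n (n + 1)) ((id_blinfun - P (n + 1)) (g n))"
        unfolding T2_def by simp
      also have "A n o\<^sub>L cocycle A n (n + 1) = id_blinfun"
        using U1[OF inv, of n "n+1"] by (simp add: cocycle_same)
      finally show ?thesis by (simp add: blinfun.diff_left)
    qed
    have S1: "suminf (T1 (n+1)) = P (n+1) (g n) + A n (suminf (T1 n))"
    proof -
      have "suminf (T1 (n+1)) = (\<Sum>j. T1 (n+1) (Suc j)) + T1 (n+1) 0"
        using suminf_split_head[OF sum1[of "n+1"]] by simp
      also have "(\<Sum>j. T1 (n+1) (Suc j)) = A n (suminf (T1 n))"
        unfolding t1s using bounded_linear.suminf[OF BL sum1] by simp
      finally show ?thesis using t10 by simp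
    qed
    have S2: "suminf (T2 (n+1)) = A n (suminf (T2 n)) - (g n - P (n+1) (g n))"
    proof -
      have "suminf (T2 (n+1)) = (\<Sum>j. A n (T2 n (Suc j)))" unfolding t2s ..
      also have "\<dots> = A n (\<Sum>j. T2 n (Suc j))"
        using bounded_linear.suminf[OF BL summable_Suc_iff[THEN iffD2, OF sum2]] by simp
      also have "(\<Sum>j. T2 n (Suc j)) = suminf (T2 n) - T2 n 0" using suminf_split_head[OF sum2] .
      finally show ?thesis using t20 by (simp add: blinfun.diff_right)
    qed
    show ?thesis unfolding z_def S1 S2 by (simp add: blinfun.diff_right algebra_simps)
  qed
  define c where "c j = q ^ j" for j
  have cnn: "0 \<le> c j" for j using q unfolding c_def by simp
  have csum: "summable c" unfolding c_def using q by (intro summable_geometric) auto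
  have csum_eq: "(\<Sum>j. c j) = 1 / (1 - q)" unfolding c_def using q suminf_geometric[of q] by simp
  define h1 where "h1 n = (\<Sum>j. c j * s (n + (- 1 - int j)))" for n
  define h2 where "h2 n = (\<Sum>j. c j * s (n + int j))" for n
  have H1: "h1 \<in> B \<and> N h1 \<le> (\<Sum>j. c j) * Ns"
    using conv_B[OF bss adm sB s0 cnn csum, of "\<lambda>j. - 1 - int j"] unfolding h1_def Ns_def by simp
  have H2: "h2 \<in> B \<and> N h2 \<le> (\<Sum>j. c j) * Ns"
    using conv_B[OF bss adm sB s0 cnn csum, of "\<lambda>j. int j"] unfolding h2_def Ns_def by simp
  have zb: "norm (z n) \<le> C * h1 n + C * h2 n" for n
  proof -
    have sm1: "summable (\<lambda>j. C * q ^ j * s (n + (- 1 - int j)))"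
      by (rule summ_geom_bd[OF q(1,2), of _ C "\<lambda>j. s (n + (- 1 - int j))"]) (use s0 sb C q in auto)
    have sm2: "summable (\<lambda>j. C * q ^ j * s (n + int j))"
      by (rule summ_geom_bd[OF q(1,2), of _ C "\<lambda>j. s (n + int j)"]) (use s0 sb C q in auto)
    have "norm (suminf (T1 n)) \<le> (\<Sum>j. C * q ^ j * s (n + (- 1 - int j)))"
      by (rule norm_suminf_le[OF b1 sm1])
    also have "\<dots> = C * h1 n" unfolding h1_def c_def
      using suminf_mult[of "\<lambda>j. q ^ j * s (n + (- 1 - int j))" C] sm1
      using C by (auto simp add: mult.assoc dest: summable_mult_D[of C])
    finally have n1: "norm (suminf (T1 n)) \<le> C * h1 n" .
    have "norm (suminf (T2 n)) \<le> (\<Sum>j. C * q ^ j * s (n + int j))"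
      by (rule norm_suminf_le[OF b2 sm2])
    also have "\<dots> = C * h2 n" unfolding h2_def c_def
      using suminf_mult[of "\<lambda>j. q ^ j * s (n + int j)" C] sm2
      using C by (auto simp add: mult.assoc dest: summable_mult_D[of C])
    finally have n2: "norm (suminf (T2 n)) \<le> C * h2 n" .
    show ?thesis unfolding z_def using norm_triangle_ineq4[of "suminf (T1 n)" "suminf (T2 n)"] n1 n2 by linarith
  qed
  have hB: "(\<lambda>n. C * h1 n + C * h2 n) \<in> B"
    using B_add[OF bss adm B_scale[OF bss adm H1[THEN conjunct1]] B_scale[OF bss adm H2[THEN conjunct1]]] .
  have zB: "(\<lambda>n. norm (z n)) \<in> B \<and> N (\<lambda>n. norm (z n)) \<le> N (\<lambda>n. C * h1 n + C * h2 n)"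
    using B_latt[OF bss adm hB, of "\<lambda>n. norm (z n)"] zb by (smt (verit) norm_ge_zero)
  have "N (\<lambda>n. C * h1 n + C * h2 n) \<le> N (\<lambda>n. C * h1 n) + N (\<lambda>n. C * h2 n)"
    using N_tri[OF bss adm B_scale[OF bss adm H1[THEN conjunct1]] B_scale[OF bss adm H2[THEN conjunct1]]] .
  also have "\<dots> = C * N h1 + C * N h2"
    using N_scale[OF bss adm H1[THEN conjunct1]] N_scale[OF bss adm H2[THEN conjunct1]] C by simp
  also have "\<dots> \<le> C * (1 / (1 - q) * Ns) + C * (1 / (1 - q) * Ns)"
    using H1 H2 C csum_eq by (intro add_mono mult_left_mono) auto
  also have "\<dots> = (2 * C / (1 - exp (- lam))) * N (\<lambda>n. norm (g n))"
    unfolding q_def Ns_def s_def by (simp add: field_simps)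
  finally show ?thesis using rec zB by (intro exI[of _ z]) auto
qed



theorem corollary3p7:
  fixes A :: "int \<Rightarrow> ('a::banach \<Rightarrow>\<^sub>L 'a)"
    and B :: "(int \<Rightarrow> real) set" and N :: "(int \<Rightarrow> real) \<Rightarrow> real"
  assumes "banach_seq_space B N" and "admissible B N"
    and "\<forall>n. invertible_op (A n)"
    and "\<exists>M. \<forall>n. norm (A n) \<le> M"
    and "exp_dichotomy A"
  shows "\<exists>L>0. \<forall>\<epsilon>>0. \<forall>y :: int \<Rightarrow> 'a.
           in_XB B (\<lambda>n. y (n + 1) - A n (y n)) \<and>
           norm_XB N (\<lambda>n. y (n + 1) - A n (y n)) \<le> L * \<epsilon> \<longrightarrow>
           (\<exists>x :: int \<Rightarrow> 'a. (\<forall>n. x (n + 1) = A n (x n)) \<and>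
               in_XB B (\<lambda>n. x n - y n) \<and> norm_XB N (\<lambda>n. x n - y n) \<le> \<epsilon>) \<and>
           (\<forall>x x' :: int \<Rightarrow> 'a.
               (\<forall>n. x (n + 1) = A n (x n)) \<and> in_XB B (\<lambda>n. x n - y n) \<and> norm_XB N (\<lambda>n. x n - y n) \<le> \<epsilon> \<and>
               (\<forall>n. x' (n + 1) = A n (x' n)) \<and> in_XB B (\<lambda>n. x' n - y n) \<and> norm_XB N (\<lambda>n. x' n - y n) \<le> \<epsilon>
               \<longrightarrow> x = x')"
proof -
  note bss = assms(1) and adm = assms(2) and inv = assms(3)
  obtain P :: "int \<Rightarrow> ('a \<Rightarrow>\<^sub>L 'a)" and C lam where C: "C > 0" and lam: "lam > 0"
    and Pc: "\<forall>m. P (m + 1) o\<^sub>L A m = A m o\<^sub>L P m"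
    and st: "\<forall>m n. m \<ge> n \<longrightarrow> norm (cocycle A m n o\<^sub>L P n) \<le> C * exp (- lam * real_of_int (m - n))"
    and un: "\<forall>m n. m \<le> n \<longrightarrow> norm (cocycle A m n o\<^sub>L (id_blinfun - P n)) \<le> C * exp (- lam * real_of_int (n - m))"
    using assms(5) unfolding exp_dichotomy_def by blast
  define K where "K = 2 * C / (1 - exp (- lam))"
  have K: "K > 0" unfolding K_def using C lam by simp
  show ?thesis
  proof (intro exI[of _ "1 / K"] conjI allI impI)
    show "1 / K > 0" using K by simp
    fix \<epsilon> :: real and y :: "int \<Rightarrow> 'a"
    assume e: "\<epsilon> > 0"
    assume hy: "in_XB B (\<lambda>n. y (n + 1) - A n (y n)) \<and> norm_XB N (\<lambda>n. y (n + 1) - A n (y n)) \<le> 1 / K * \<epsilon>"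
    define g where "g n = y (n + 1) - A n (y n)" for n
    have gB: "(\<lambda>n. norm (g n)) \<in> B" and gN: "N (\<lambda>n. norm (g n)) \<le> 1 / K * \<epsilon>"
      using hy unfolding in_XB_def norm_XB_def g_def by auto
    obtain z where rec: "\<forall>n. z (n+1) = A n (z n) + g n" and zB: "(\<lambda>n. norm (z n)) \<in> B"
      and zN: "N (\<lambda>n. norm (z n)) \<le> K * N (\<lambda>n. norm (g n))"
      using existence[OF bss adm inv C lam st un gB] unfolding K_def by blast
    define x where "x n = y n - z n" for n
    have xs: "\<forall>n. x (n + 1) = A n (x n)"
    proof
      fix n
      show "x (n + 1) = A n (x n)" unfolding x_def using rec[rule_format, of n]
        by (simp add: g_def blinfun.diff_right)
    qed
    have nxy: "(\<lambda>n. norm (x n - y n)) = (\<lambda>n. norm (z n))" unfolding x_def by simp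
    have "K * N (\<lambda>n. norm (g n)) \<le> K * (1 / K * \<epsilon>)" using gN K by (intro mult_left_mono) auto
    also have "\<dots> = \<epsilon>" using K by simp
    finally have "N (\<lambda>n. norm (z n)) \<le> \<epsilon>" using zN by linarith
    then show "\<exists>x :: int \<Rightarrow> 'a. (\<forall>n. x (n + 1) = A n (x n)) \<and>
               in_XB B (\<lambda>n. x n - y n) \<and> norm_XB N (\<lambda>n. x n - y n) \<le> \<epsilon>"
      using xs zB nxy unfolding in_XB_def norm_XB_def by (intro exI[of _ x]) auto
  next
    fix \<epsilon> :: real and y :: "int \<Rightarrow> 'a" and x x' :: "int \<Rightarrow> 'a"
    assume hx: "(\<forall>n. x (n + 1) = A n (x n)) \<and> in_XB B (\<lambda>n. x n - y n) \<and> norm_XB N (\<lambda>n. x n - y n) \<le> \<epsilon> \<and>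
               (\<forall>n. x' (n + 1) = A n (x' n)) \<and> in_XB B (\<lambda>n. x' n - y n) \<and> norm_XB N (\<lambda>n. x' n - y n) \<le> \<epsilon>"
    have b1: "norm (x n - y n) \<le> \<epsilon>" for n
      using pt_le_N[OF bss adm, of "\<lambda>n. norm (x n - y n)" n] hx unfolding in_XB_def norm_XB_def by simp
    have b2: "norm (x' n - y n) \<le> \<epsilon>" for n
      using pt_le_N[OF bss adm, of "\<lambda>n. norm (x' n - y n)" n] hx unfolding in_XB_def norm_XB_def by simp
    have bd: "norm (x n - x' n) \<le> 2 * \<epsilon>" for n
    proof -
      have "x n - x' n = (x n - y n) - (x' n - y n)" by simp
      then have "norm (x n - x' n) \<le> norm (x n - y n) + norm (x' n - y n)"
        by (metis norm_triangle_ineq4)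
      then show ?thesis using b1[of n] b2[of n] by linarith
    qed
    have ws: "\<forall>n. (\<lambda>n. x n - x' n) (n + 1) = A n ((\<lambda>n. x n - x' n) n)"
      using hx by (simp add: blinfun.diff_right)
    show "x = x'"
    proof
      fix n
      have "x n - x' n = 0"
        using uniqueness[OF inv C lam Pc st un ws, of "2 * \<epsilon>"] bd by simp
      then show "x n = x' n" by simp
    qed
  qed
qed

end
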